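(* Let $\Gamma_M$ be a perfect matching graph representing a planar trivalent graph $G$ with perfect matching $M$, and assume $(G,M)\notin\mathscr G$. If every arc of the resolution configuration $D_{\Gamma_M}(\overline 0)$ (all-zero state) is an $m$-arc, then $D_{\Gamma_M}(\overline 0)$ is not consistently orientable.
   Context: A perfect matching graph $\Gamma_M$ is an embedding in $S^2$ of a planar trivalent graph $G$ together with a perfect matching $M$; fix an ordering $M_1,\dots,M_n$ of $M$. Resolution configurations: $D=(Z(D),A(D))$, $Z(D)$ a finite set of circles immersed in $S^2$ (union has only transverse double points), $A(D)$ a finite totally ordered set of disjoint embedded arcs meeting the circles exactly in their endpoints. Surgery $s_A(D)$ along $A$: in a small disk around $A$ meeting the circles in segments with ends $z,w$ and $x,y$ ($z,x$ on one side of $A$, $w,y$ on the other), replace them by strands $z$–$y$ and $x$–$w$ crossing once transversally; arcs become $A(D)\setminus\{A\}$. An arc is an $\eta$-, $\Delta$-, or $m$-arc according as surgery changes the number of circles by $0,+1,-1$. Resolutions: for a matching edge $e=uv$, let $a,b$ be the other edges at $u$ and $c,d$ those at $v$, with $a,c$ on the same side of $e$. The $0$-resolution removes $u,v,e$, joins $a$–$c$ and $b$–$d$ by disjoint strands parallel to $e$, and places an arc joining them; the $1$-resolution joins $a$–$d$ and $b$–$c$ by strands crossing once, no arc. $D_{\Gamma_M}(v)$, $v\in\{0,1\}^n$, takes the $v_i$-resolution at $M_i$, with arcs $A_i$ ($v_i=0$) ordered by $i$. (The circles of $D_{\Gamma_M}(\overline 0)$ are pairwise disjoint embedded circles.) Bad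 face: states $v,u$ differing exactly in coordinates $i\neq j$, $v_i=v_j=0$, $u_i=u_j=1$, such that for some ordering of $\{i,j\}$: $A_i$ is an $\eta$-arc of $D_{\Gamma_M}(v)$, $A_j$ is an $\eta$-arc of $s_{A_i}(D_{\Gamma_M}(v))$, $A_j$ is a $\Delta$-arc of $D_{\Gamma_M}(v)$, and $A_i$ is an $m$-arc of $s_{A_j}(D_{\Gamma_M}(v))$. $\mathscr G$ is the family of pairs $(G,M)$ ($G$ planar trivalent, $M$ a perfect matching) such that for every perfect matching graph representing $(G,M)$ (every plane embedding, every ordering of $M$) the hypercube of states contains no bad face. Consistently orientable: a resolution configuration whose circles are pairwise disjoint embedded circles is consistently orientable if the circles can be oriented so that for every arc $A$, in a small disk around $A$ identified orientation-preservingly with $[0,1]^2$ so that the two circle segments become $\{1/3\}\times[0,1]$ and $\{2/3\}\times[0,1]$ and $A$ becomes $[1/3,2/3]\times\{1/2\}$, both segments are oriented in the same (upward) direction. *)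

theory Defs
  imports Main
begin

text \<open>
A planar trivalent (multi)graph G is given by a finite set H of
darts (half-edges), a fixed-point-free involution alpha on H (the two darts of an edge)
and a vertex map vert (each vertex carries exactly three darts).  A plane embedding
(in S^2) is a rotation system sigma: a permutation of H preserving vert, cyclically
permuting the three darts at each vertex counterclockwise, such that every connected
component has genus 0 (Euler: V - E + F = 2 * number of components, F = orbits of
sigma o alpha).
\<close>

definition num_classes :: "'a set \<Rightarrow> ('a \<times> 'a) set \<Rightarrow> nat" where
  "num_classes A R = card ((\<lambda>x. {y \<in> A. (x, y) \<in> R\<^sup>*}) ` A)"

definition trivalent_graph :: "'d set \<Rightarrow> ('d \<Rightarrow> 'd) \<Rightarrow> ('d \<Rightarrow> 'v) \<Rightarrow> bool" where
  "trivalent_graph H \<alpha> vert \<longleftrightarrow> finite H \<and>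
     (\<forall>x\<in>H. \<alpha> x \<in> H \<and> \<alpha> x \<noteq> x \<and> \<alpha> (\<alpha> x) = x) \<and>
     (\<forall>x\<in>H. card {y \<in> H. vert y = vert x} = 3)"

definition graph_edges :: "'d set \<Rightarrow> ('d \<Rightarrow> 'd) \<Rightarrow> 'd set set" where
  "graph_edges H \<alpha> = (\<lambda>x. {x, \<alpha> x}) ` H"

definition perfect_matching :: "'d set \<Rightarrow> ('d \<Rightarrow> 'd) \<Rightarrow> ('d \<Rightarrow> 'v) \<Rightarrow> 'd set set \<Rightarrow> bool" where
  "perfect_matching H \<alpha> vert M \<longleftrightarrow> M \<subseteq> graph_edges H \<alpha> \<and>
     (\<forall>e\<in>M. \<forall>x\<in>e. vert (\<alpha> x) \<noteq> vert x) \<and>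
     (\<forall>x\<in>H. \<exists>!e. e \<in> M \<and> (\<exists>y\<in>e. vert y = vert x))"

definition plane_embedding :: "'d set \<Rightarrow> ('d \<Rightarrow> 'd) \<Rightarrow> ('d \<Rightarrow> 'v) \<Rightarrow> ('d \<Rightarrow> 'd) \<Rightarrow> bool" where
  "plane_embedding H \<alpha> vert \<sigma> \<longleftrightarrow> bij_betw \<sigma> H H \<and>
     (\<forall>x\<in>H. vert (\<sigma> x) = vert x \<and> \<sigma> x \<noteq> x) \<and>
     card (vert ` H) + num_classes H {(x, \<sigma> (\<alpha> x)) | x. x \<in> H}
       = card (graph_edges H \<alpha>)
         + 2 * num_classes H ({(x, \<alpha> x) | x. x \<in> H} \<union> {(x, \<sigma> x) | x. x \<in> H})"

text \<open>An ordering M_0, ..., M_(n-1) of M (indices shifted to start at 0).\<close>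
definition matching_ordering :: "'d set set \<Rightarrow> (nat \<Rightarrow> 'd set) \<Rightarrow> bool" where
  "matching_ordering M Mo \<longleftrightarrow> bij_betw Mo {..<card M} M"

definition pm_graph :: "'d set \<Rightarrow> ('d \<Rightarrow> 'd) \<Rightarrow> ('d \<Rightarrow> 'v) \<Rightarrow> ('d \<Rightarrow> 'd)
     \<Rightarrow> 'd set set \<Rightarrow> (nat \<Rightarrow> 'd set) \<Rightarrow> bool" where
  "pm_graph H \<alpha> vert \<sigma> M Mo \<longleftrightarrow> trivalent_graph H \<alpha> vert \<and> perfect_matching H \<alpha> vert M
     \<and> plane_embedding H \<alpha> vert \<sigma> \<and> matching_ordering M Mo"

text \<open>States: v :: nat => bool, v i = True meaning the 1-resolution at M_i.
The circles of D(v) are built from strand pieces: the non-matching darts ("nodes")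
are joined along their edges (x -- alpha x) and through the resolution of the matching
edge at their vertex (x -- res x).  For the matching dart h at u (edge e = u v,
other darts a = sigma h, b = sigma^2 h at u and c = sigma^2 (alpha h) , d = sigma (alpha h)
at v, so that a, c lie on the same (left) side of e): the 0-resolution joins a--c and
b--d, the 1-resolution joins a--d and b--c.\<close>

definition mdart :: "'d set set \<Rightarrow> ('d \<Rightarrow> 'v) \<Rightarrow> 'd \<Rightarrow> 'd" where
  "mdart M vert x = (THE h. h \<in> \<Union>M \<and> vert h = vert x)"

definition midx :: "'d set set \<Rightarrow> (nat \<Rightarrow> 'd set) \<Rightarrow> 'd \<Rightarrow> nat" where
  "midx M Mo h = (THE i. i < card M \<and> h \<in> Mo i)"

definition res :: "('d \<Rightarrow> 'd) \<Rightarrow> ('d \<Rightarrow> 'v) \<Rightarrow> ('d \<Rightarrow> 'd) \<Rightarrow> 'd set set \<Rightarrow> (nat \<Rightarrow> 'd set)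
     \<Rightarrow> (nat \<Rightarrow> bool) \<Rightarrow> 'd \<Rightarrow> 'd" where
  "res \<alpha> vert \<sigma> M Mo v x =
     (let h = mdart M vert x; i = midx M Mo h in
      if \<not> v i then (if x = \<sigma> h then \<sigma> (\<sigma> (\<alpha> h)) else \<sigma> (\<alpha> h))
      else (if x = \<sigma> h then \<sigma> (\<alpha> h) else \<sigma> (\<sigma> (\<alpha> h))))"

definition nodes :: "'d set \<Rightarrow> 'd set set \<Rightarrow> 'd set" where
  "nodes H M = H - \<Union>M"

definition ncirc :: "'d set \<Rightarrow> ('d \<Rightarrow> 'd) \<Rightarrow> ('d \<Rightarrow> 'v) \<Rightarrow> ('d \<Rightarrow> 'd) \<Rightarrow> 'd set set
     \<Rightarrow> (nat \<Rightarrow> 'd set) \<Rightarrow> (nat \<Rightarrow> bool) \<Rightarrow> int" where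
  "ncirc H \<alpha> vert \<sigma> M Mo v = int (num_classes (nodes H M)
      ({(x, \<alpha> x) | x. x \<in> nodes H M} \<union> {(x, res \<alpha> vert \<sigma> M Mo v x) | x. x \<in> nodes H M}))"

text \<open>Surgery along the arc A_i of D(v) (v i = False) yields the configuration D(v(i:=True)):
the two strands z--w, x--y are replaced by z--y, x--w, which is the 1-resolution at M_i,
and the arc A_i is removed.\<close>
definition surg :: "(nat \<Rightarrow> bool) \<Rightarrow> nat \<Rightarrow> (nat \<Rightarrow> bool)" where
  "surg v i = v(i := True)"

definition arc_change where
  "arc_change H \<alpha> vert \<sigma> M Mo v i = ncirc H \<alpha> vert \<sigma> M Mo (surg v i) - ncirc H \<alpha> vert \<sigma> M Mo v"

definition eta_arc where "eta_arc H \<alpha> vert \<sigma> M Mo v i \<longleftrightarrow> arc_change H \<alpha> vert \<sigma> M Mo v i = 0"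
definition Delta_arc where "Delta_arc H \<alpha> vert \<sigma> M Mo v i \<longleftrightarrow> arc_change H \<alpha> vert \<sigma> M Mo v i = 1"
definition m_arc where "m_arc H \<alpha> vert \<sigma> M Mo v i \<longleftrightarrow> arc_change H \<alpha> vert \<sigma> M Mo v i = -1"

definition bad_face_cond where
  "bad_face_cond H \<alpha> vert \<sigma> M Mo v i j \<longleftrightarrow>
     eta_arc H \<alpha> vert \<sigma> M Mo v i \<and> eta_arc H \<alpha> vert \<sigma> M Mo (surg v i) j \<and>
     Delta_arc H \<alpha> vert \<sigma> M Mo v j \<and> m_arc H \<alpha> vert \<sigma> M Mo (surg v j) i"

definition has_bad_face where
  "has_bad_face H \<alpha> vert \<sigma> M Mo \<longleftrightarrow>
     (\<exists>v i j. i < card M \<and> j < card M \<and> i \<noteq> j \<and> \<not> v i \<and> \<not> v j \<and>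
        (bad_face_cond H \<alpha> vert \<sigma> M Mo v i j \<or> bad_face_cond H \<alpha> vert \<sigma> M Mo v j i))"

definition in_scrG :: "'d set \<Rightarrow> ('d \<Rightarrow> 'd) \<Rightarrow> ('d \<Rightarrow> 'v) \<Rightarrow> 'd set set \<Rightarrow> bool" where
  "in_scrG H \<alpha> vert M \<longleftrightarrow>
     (\<forall>\<sigma> Mo. plane_embedding H \<alpha> vert \<sigma> \<and> matching_ordering M Mo
        \<longrightarrow> \<not> has_bad_face H \<alpha> vert \<sigma> M Mo)"

text \<open>Consistent orientability of D(0): o x = True means the circle through node x is
traversed from x along its resolution strand to res x (hence arriving at x along the
edge strand from alpha x).  At the arc A_i of the matching edge with dart h at u, the
strands a--c and b--d (a = sigma h, b = sigma^2 h) are oriented from the u-side to the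
v-side iff o a, resp. o b; consistency demands they are oriented the same way.\<close>
definition consistently_orientable_zero where
  "consistently_orientable_zero H \<alpha> vert \<sigma> M Mo \<longleftrightarrow>
     (\<exists>ori :: 'd \<Rightarrow> bool.
        (\<forall>x \<in> nodes H M. ori (\<alpha> x) \<noteq> ori x \<and> ori (res \<alpha> vert \<sigma> M Mo (\<lambda>_. False) x) \<noteq> ori x) \<and>
        (\<forall>i < card M. \<forall>h \<in> Mo i. ori (\<sigma> h) = ori (\<sigma> (\<sigma> h))))"

end

theory Submission
  imports Defs "HOL-Combinatorics.Orbits"
begin


lemma orbit_eq_perm:
  assumes "permutation f" "x \<in> orbit f y" shows "orbit f x = orbit f y"
proof
  show "orbit f x \<subseteq> orbit f y" using assms(2) orbit_trans by fast
  have "y \<in> orbit f x" using orbit_swap[OF permutation_self_in_orbit[OF assms(1)] assms(2)] .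
  then show "orbit f y \<subseteq> orbit f x" using orbit_trans by fast
qed

lemma split_orbit:
  assumes perm: "p permutes N" and fin: "finite N" and x: "x \<in> N" and px: "p x \<noteq> x"
  defines "q \<equiv> transpose x (p x) \<circ> p"
  shows "card ((\<lambda>y. orbit q y) ` N) = Suc (card ((\<lambda>y. orbit p y) ` N))"
proof -
  have pp: "permutation p" by (rule permutes_imp_permutation[OF fin perm])
  have pxN: "p x \<in> N" using x by (simp add: permutes_in_image[OF perm])
  have qperm: "q permutes N" unfolding q_def
    by (rule permutes_compose[OF perm permutes_swap_id[OF x pxN]])
  have qp: "permutation q" by (rule permutes_imp_permutation[OF fin qperm])
  have injp: "inj p" using perm permutes_inj by blast
  define Ob where "Ob = orbit p x"
  have qx: "q x = x" unfolding q_def by simp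
  have qO1: "orbit q x = {x}" using qx orbit_eq_singleton_iff by metis
  have sub1: "orbit q (p x) \<subseteq> Ob - {x}"
  proof
    fix z assume "z \<in> orbit q (p x)"
    then show "z \<in> Ob - {x}"
    proof induct
      case base
      show ?case
      proof (cases "p (p x) = x")
        case True then show ?thesis using px by (simp add: q_def Ob_def orbit.base)
      next
        case False
        have "p (p x) \<noteq> p x" using px injp by (metis injD)
        then have "q (p x) = p (p x)" using False by (simp add: q_def)
        then show ?thesis using False by (simp add: Ob_def orbit.base orbit.step)
      qed
    next
      case (step z)
      show ?case
      proof (cases "p z = x")
        case True then show ?thesis using px by (simp add: q_def Ob_def orbit.base)
      next
        case False
        have "p z \<noteq> p x" using step injp by (metis DiffE injD singletonI)
        then have "q z = p z" using False by (simp add: q_def)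
        then show ?thesis using False step by (simp add: Ob_def orbit.step)
      qed
    qed
  qed
  have sub2: "Ob - {x} \<subseteq> orbit q (p x)"
  proof
    fix z assume "z \<in> Ob - {x}"
    then have "z \<in> orbit p x" "z \<noteq> x" by (auto simp: Ob_def)
    then show "z \<in> orbit q (p x)"
    proof induct
      case base then show ?case using permutation_self_in_orbit[OF qp] by blast
    next
      case (step z)
      show ?case
      proof (cases "z = x")
        case True then show ?thesis using permutation_self_in_orbit[OF qp] by blast
      next
        case False
        have "p z \<noteq> p x" using False injp by (metis injD)
        then have "q z = p z" using step by (simp add: q_def)
        then show ?thesis using step False orbit.step by metis
      qed
    qed
  qed
  have qO2: "orbit q (p x) = Ob - {x}" using sub1 sub2 by blast
  have xO: "x \<in> Ob" unfolding Ob_def using permutation_self_in_orbit[OF pp] .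
  have other: "orbit q y = orbit p y" if "y \<notin> Ob" for y
  proof (rule orbit_cong[OF permutation_self_in_orbit[OF pp]])
    fix s assume s: "s \<in> orbit p y"
    have "p s \<noteq> x"
    proof
      assume "p s = x"
      then have "x \<in> orbit p y" using s orbit.step by metis
      then have "orbit p x = orbit p y" using orbit_eq_perm[OF pp] by blast
      then show False using that permutation_self_in_orbit[OF pp, of y] by (simp add: Ob_def)
    qed
    moreover have "s \<noteq> x"
    proof
      assume "s = x"
      then have "orbit p x = orbit p y" using s orbit_eq_perm[OF pp] by blast
      then show False using that permutation_self_in_orbit[OF pp, of y] by (simp add: Ob_def)
    qed
    then have "p s \<noteq> p x" using injp by (metis injD)
    ultimately show "q s = p s" by (simp add: q_def)
  qed
  have inO: "orbit q y = Ob - {x}" if "y \<in> Ob" "y \<noteq> x" for y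
    using orbit_eq_perm[OF qp, of y "p x"] that qO2 by blast
  have img: "(\<lambda>y. orbit q y) ` N = insert {x} (insert (Ob - {x}) ((\<lambda>y. orbit p y) ` N - {Ob}))"
  proof (intro set_eqI iffI)
    fix S assume "S \<in> (\<lambda>y. orbit q y) ` N"
    then obtain y where y: "y \<in> N" "S = orbit q y" by blast
    show "S \<in> insert {x} (insert (Ob - {x}) ((\<lambda>y. orbit p y) ` N - {Ob}))"
    proof (cases "y \<in> Ob")
      case True then show ?thesis using y qO1 inO by (cases "y = x") auto
    next
      case False
      then have "orbit p y \<noteq> Ob" using permutation_self_in_orbit[OF pp, of y] by auto
      then show ?thesis using y other[OF False] by auto
    qed
  next
    fix S assume S: "S \<in> insert {x} (insert (Ob - {x}) ((\<lambda>y. orbit p y) ` N - {Ob}))"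
    show "S \<in> (\<lambda>y. orbit q y) ` N"
    proof -
      { assume "S = {x}" then have ?thesis using qO1 x by blast }
      moreover { assume "S = Ob - {x}" then have ?thesis using qO2 pxN by blast }
      moreover { assume "S \<in> (\<lambda>y. orbit p y) ` N - {Ob}"
        then obtain y where y: "y \<in> N" "S = orbit p y" "orbit p y \<noteq> Ob" by blast
        have "y \<notin> Ob" using y(3) orbit_eq_perm[OF pp, of y x] by (auto simp: Ob_def)
        then have ?thesis using y other by blast }
      ultimately show ?thesis using S by blast
    qed
  qed
  have ON: "Ob \<in> (\<lambda>y. orbit p y) ` N" using x Ob_def by blast
  have n1: "{x} \<notin> (\<lambda>y. orbit p y) ` N - {Ob}"
  proof
    assume "{x} \<in> (\<lambda>y. orbit p y) ` N - {Ob}"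
    then obtain y where "orbit p y = {x}" "orbit p y \<noteq> Ob" by blast
    then show False using orbit_eq_perm[OF pp, of x y] by (auto simp: Ob_def)
  qed
  have pxO: "p x \<in> Ob - {x}" using px by (simp add: Ob_def orbit.base)
  have n2: "Ob - {x} \<notin> (\<lambda>y. orbit p y) ` N - {Ob}"
  proof
    assume "Ob - {x} \<in> (\<lambda>y. orbit p y) ` N - {Ob}"
    then obtain y where y: "orbit p y = Ob - {x}" by blast
    then have "orbit p (p x) = orbit p y" using pxO orbit_eq_perm[OF pp] by blast
    moreover have "orbit p (p x) = Ob" using permutation_orbit_step[OF pp] by (simp add: Ob_def)
    ultimately show False using y xO by blast
  qed
  have n3: "{x} \<noteq> Ob - {x}" by blast
  have finI: "finite ((\<lambda>y. orbit p y) ` N)" using fin by blast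
  have "card ((\<lambda>y. orbit q y) ` N) = Suc (Suc (card ((\<lambda>y. orbit p y) ` N - {Ob})))"
    unfolding img using n1 n2 n3 finI by (simp add: card_insert_if)
  also have "\<dots> = Suc (card ((\<lambda>y. orbit p y) ` N))"
    using ON finI card_Suc_Diff1 by (metis)
  finally show ?thesis .
qed

lemma evenperm_orbits:
  assumes "finite N" "p permutes N"
  shows "evenperm p \<longleftrightarrow> even (card N + card ((\<lambda>y. orbit p y) ` N))"
  using assms
proof (induction "card {x. p x \<noteq> x}" arbitrary: p rule: less_induct)
  case less
  show ?case
  proof (cases "\<exists>x. p x \<noteq> x")
    case False
    then have "p = id" by auto
    moreover have "card ((\<lambda>y. orbit id y) ` N) = card N"
    proof -
      have "(\<lambda>y. orbit id y) ` N = (\<lambda>y. {y}) ` N"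
        by (rule image_cong) (simp_all add: orbit_eq_singleton_iff)
      then show ?thesis by (simp add: card_image)
    qed
    ultimately show ?thesis by simp
  next
    case True
    then obtain x where px: "p x \<noteq> x" by blast
    have x: "x \<in> N"
    proof (rule ccontr)
      assume "x \<notin> N" then have "p x = x" by (rule permutes_not_in[OF less(3)])
      then show False using px by simp
    qed
    have pxN: "p x \<in> N" using x by (simp add: permutes_in_image[OF less(3)])
    define q where "q = transpose x (p x) \<circ> p"
    have qperm: "q permutes N" unfolding q_def
      by (rule permutes_compose[OF less(3) permutes_swap_id[OF x pxN]])
    have injp: "inj p" using less(3) permutes_inj by blast
    have sub: "{y. q y \<noteq> y} \<subset> {y. p y \<noteq> y}"
    proof -
      have "{y. q y \<noteq> y} \<subseteq> {y. p y \<noteq> y}"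
      proof
        fix y assume "y \<in> {y. q y \<noteq> y}"
        then have "q y \<noteq> y" by simp
        show "y \<in> {y. p y \<noteq> y}"
        proof (rule ccontr)
          assume "y \<notin> {y. p y \<noteq> y}"
          then have "p y = y" by simp
          moreover have "y \<noteq> x" using \<open>p y = y\<close> px by auto
          moreover have "y \<noteq> p x"
          proof
            assume "y = p x"
            then have "p (p x) = p x" using \<open>p y = y\<close> by simp
            then have "p x = x" by (rule injD[OF injp])
            then show False using px by simp
          qed
          ultimately show False using \<open>q y \<noteq> y\<close> by (simp add: q_def)
        qed
      qed
      moreover have "q x = x" by (simp add: q_def)
      ultimately show ?thesis using px by blast
    qed
    have "{y. p y \<noteq> y} \<subseteq> N" using permutes_not_in[OF less(3)] by blast
    then have finp: "finite {y. p y \<noteq> y}" using less(2) finite_subset by blast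
    have "card {y. q y \<noteq> y} < card {y. p y \<noteq> y}" using sub finp psubset_card_mono by blast
    then have IH: "evenperm q \<longleftrightarrow> even (card N + card ((\<lambda>y. orbit q y) ` N))"
      using less(1) less(2) qperm by blast
    have pp: "permutation p" by (rule permutes_imp_permutation[OF less(2,3)])
    have "evenperm q \<longleftrightarrow> (evenperm (transpose x (p x)) = evenperm p)" unfolding q_def
      by (rule evenperm_comp[OF permutation_swap_id pp])
    then have "evenperm q \<longleftrightarrow> \<not> evenperm p" using px by (simp add: evenperm_swap)
    moreover have "card ((\<lambda>y. orbit q y) ` N) = Suc (card ((\<lambda>y. orbit p y) ` N))"
      unfolding q_def by (rule split_orbit[OF less(3) less(2) x px])
    ultimately have "(\<not> evenperm p) \<longleftrightarrow> even (card N + Suc (card ((\<lambda>y. orbit p y) ` N)))"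
      using IH by simp
    then show ?thesis by (simp only: even_add even_Suc) argo
  qed
qed



lemma tri3:
  assumes tri: "trivalent_graph H \<alpha> vert" and sb: "bij_betw s H H"
    and sv: "\<forall>x\<in>H. vert (s x) = vert x \<and> s x \<noteq> x" and h: "h \<in> H"
  shows "{y\<in>H. vert y = vert h} = {h, s h, s (s h)} \<and> s h \<noteq> h \<and> s (s h) \<noteq> s h \<and> s (s h) \<noteq> h"
proof -
  let ?C = "{y\<in>H. vert y = vert h}"
  have c3: "card ?C = 3" using tri h by (simp add: trivalent_graph_def)
  have fin: "finite ?C" using tri by (simp add: trivalent_graph_def)
  have inj: "inj_on s H" using sb bij_betw_def by blast
  have sH: "\<And>y. y \<in> H \<Longrightarrow> s y \<in> H" using sb bij_betwE by blast
  have s1: "s h \<in> H" "s (s h) \<in> H" using sH h by auto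
  have n1: "s h \<noteq> h" using sv h by blast
  have n2: "s (s h) \<noteq> s h" using sv s1 by blast
  have v1: "vert (s h) = vert h" "vert (s (s h)) = vert h" using sv h s1 by auto
  have n3: "s (s h) \<noteq> h"
  proof
    assume eq: "s (s h) = h"
    have "card {h, s h} = 2" using n1 by simp
    moreover have "{h, s h} \<subseteq> ?C" using h s1 v1 by auto
    ultimately have "{h, s h} \<subset> ?C" using c3 by auto
    then obtain z where z: "z \<in> ?C" "z \<noteq> h" "z \<noteq> s h" by blast
    have sub3: "{h, s h, z} \<subseteq> ?C" using z h s1 v1 by auto
    have "card {h, s h, z} = 3" using z n1 by simp
    then have CC: "?C = {h, s h, z}" using c3 card_subset_eq[OF fin sub3] by simp
    have "s z \<in> ?C" using z sv sH by auto
    moreover have "s z \<noteq> z" using z sv by auto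
    moreover have "s z \<noteq> h"
    proof
      assume "s z = h" then have "s z = s (s h)" using eq by simp
      then have "z = s h" using inj z s1 by (simp add: inj_on_def)
      then show False using z by simp
    qed
    moreover have "s z \<noteq> s h"
    proof
      assume "s z = s h" then have "z = h" using inj z h by (simp add: inj_on_def)
      then show False using z by simp
    qed
    ultimately show False using CC by blast
  qed
  have sub3: "{h, s h, s (s h)} \<subseteq> ?C" using h s1 v1 by auto
  have "card {h, s h, s (s h)} = 3" using n1 n2 n3 by simp
  then have "?C = {h, s h, s (s h)}" using c3 card_subset_eq[OF fin sub3] by simp
  then show ?thesis using n1 n2 n3 by blast
qed

lemma ex1_uniq: "\<exists>!x. P x \<Longrightarrow> P a \<Longrightarrow> P b \<Longrightarrow> a = b" by blast

locale PMG =
  fixes H :: "'d set" and \<alpha> \<sigma> :: "'d \<Rightarrow> 'd" and vert :: "'d \<Rightarrow> 'v"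
    and M :: "'d set set" and Mo :: "nat \<Rightarrow> 'd set"
  assumes tri: "trivalent_graph H \<alpha> vert" and pmat: "perfect_matching H \<alpha> vert M"
    and sbij: "bij_betw \<sigma> H H" and svert: "\<forall>x\<in>H. vert (\<sigma> x) = vert x \<and> \<sigma> x \<noteq> x"
    and mord: "matching_ordering M Mo"
begin

abbreviation "N \<equiv> nodes H M"
abbreviation "md \<equiv> mdart M vert"
abbreviation "mi \<equiv> midx M Mo"

lemma finH: "finite H" using tri by (simp add: trivalent_graph_def)
lemma al: "x \<in> H \<Longrightarrow> \<alpha> x \<in> H \<and> \<alpha> x \<noteq> x \<and> \<alpha> (\<alpha> x) = x"
  using tri by (simp add: trivalent_graph_def)
lemma sH: "x \<in> H \<Longrightarrow> \<sigma> x \<in> H" using sbij bij_betwE by blast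
lemma Medge: "e \<in> M \<Longrightarrow> \<exists>y\<in>H. e = {y, \<alpha> y}"
  using pmat by (auto simp: perfect_matching_def graph_edges_def)
lemma UM_H: "h \<in> \<Union>M \<Longrightarrow> h \<in> H" using Medge al by fastforce
lemma edge_other: "e \<in> M \<Longrightarrow> h \<in> e \<Longrightarrow> e = {h, \<alpha> h}"
  using Medge al by fastforce
lemma UM_al: "h \<in> \<Union>M \<Longrightarrow> \<alpha> h \<in> \<Union>M" using edge_other by blast
lemma UM_loop: "h \<in> \<Union>M \<Longrightarrow> vert (\<alpha> h) \<noteq> vert h"
  using pmat edge_other unfolding perfect_matching_def by blast
lemma UM_unique:
  assumes "h1 \<in> \<Union>M" "h2 \<in> \<Union>M" "vert h1 = vert h2" shows "h1 = h2"
proof -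
  obtain e1 e2 where e: "e1 \<in> M" "h1 \<in> e1" "e2 \<in> M" "h2 \<in> e2" using assms by blast
  have pm3: "\<forall>x\<in>H. \<exists>!e. e \<in> M \<and> (\<exists>y\<in>e. vert y = vert x)"
    using pmat by (simp add: perfect_matching_def)
  have ex1: "\<exists>!e. e \<in> M \<and> (\<exists>y\<in>e. vert y = vert h1)" by (rule bspec[OF pm3 UM_H[OF assms(1)]])
  have "e1 = e2" by (rule ex1_uniq[OF ex1]) (use e assms(3) in auto)
  then have "h2 \<in> {h1, \<alpha> h1}" using e edge_other by blast
  moreover have "vert (\<alpha> h1) \<noteq> vert h1" using UM_loop assms(1) by blast
  ultimately show ?thesis using assms(3) by auto
qed
lemma UM_exists: assumes "x \<in> H" shows "\<exists>h\<in>\<Union>M. vert h = vert x"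
proof -
  have "\<exists>!e. e \<in> M \<and> (\<exists>y\<in>e. vert y = vert x)" using pmat assms by (simp add: perfect_matching_def)
  then obtain e where "e \<in> M" "\<exists>y\<in>e. vert y = vert x" by (rule ex1E) blast
  then show ?thesis by blast
qed
lemma md_ex1: assumes "x \<in> H" shows "\<exists>!h. h \<in> \<Union>M \<and> vert h = vert x"
proof -
  obtain h where h: "h \<in> \<Union>M" "vert h = vert x" using UM_exists[OF assms] by blast
  show ?thesis by (rule ex1I[of _ h]) (use h UM_unique in auto)
qed
lemma md: "x \<in> H \<Longrightarrow> md x \<in> \<Union>M \<and> vert (md x) = vert x"
  unfolding mdart_def by (rule theI'[OF md_ex1])
lemma md_eq: "x \<in> H \<Longrightarrow> h \<in> \<Union>M \<Longrightarrow> vert h = vert x \<Longrightarrow> md x = h"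
  using md[of x] UM_unique[of h "md x"] by simp
lemma Mo_bij: "bij_betw Mo {..<card M} M" using mord by (simp add: matching_ordering_def)
lemma Mo_in: "i < card M \<Longrightarrow> Mo i \<in> M" using Mo_bij bij_betwE by blast
lemma Mo_uniq:
  assumes "i < card M" "j < card M" "h \<in> Mo i" "h \<in> Mo j" shows "i = j"
proof -
  have "Mo i = {h, \<alpha> h}" using edge_other[OF Mo_in[OF assms(1)] assms(3)] .
  moreover have "Mo j = {h, \<alpha> h}" using edge_other[OF Mo_in[OF assms(2)] assms(4)] .
  ultimately have "Mo i = Mo j" by simp
  moreover have "inj_on Mo {..<card M}" using Mo_bij by (simp add: bij_betw_def)
  ultimately show ?thesis using assms(1,2) by (simp add: inj_on_def)
qed
lemma mi:
  assumes h: "h \<in> \<Union>M" shows "mi h < card M \<and> h \<in> Mo (mi h)"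
proof -
  obtain e where e: "e \<in> M" "h \<in> e" using h by blast
  have "M = Mo ` {..<card M}" using Mo_bij by (simp add: bij_betw_def)
  then have "e \<in> Mo ` {..<card M}" using e(1) by simp
  then obtain i where "i \<in> {..<card M}" "e = Mo i" by (rule imageE)
  then have i: "i < card M" "Mo i = e" by auto
  have "\<exists>!i. i < card M \<and> h \<in> Mo i" using i e Mo_uniq by blast
  then show ?thesis unfolding midx_def by (rule theI')
qed
lemma mi_eq: "i < card M \<Longrightarrow> h \<in> Mo i \<Longrightarrow> mi h = i"
  using mi[of h] Mo_uniq[of i "mi h" h] Mo_in by blast
lemma mi_al: assumes "h \<in> \<Union>M" shows "mi (\<alpha> h) = mi h"
proof -
  have "Mo (mi h) = {h, \<alpha> h}" using mi[OF assms] edge_other Mo_in by blast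
  then have "\<alpha> h \<in> Mo (mi h)" by simp
  then show ?thesis using mi_eq mi[OF assms] by blast
qed


lemma vclass: "h \<in> H \<Longrightarrow> {y\<in>H. vert y = vert h} = {h, \<sigma> h, \<sigma> (\<sigma> h)} \<and> \<sigma> h \<noteq> h \<and> \<sigma> (\<sigma> h) \<noteq> \<sigma> h \<and> \<sigma> (\<sigma> h) \<noteq> h"
  by (rule tri3[OF tri sbij svert])
lemma inN: "x \<in> N \<longleftrightarrow> x \<in> H \<and> x \<notin> \<Union>M" by (simp add: nodes_def)
lemma finN: "finite N" using finH by (simp add: nodes_def)

lemma node_cases: assumes "x \<in> N" shows "x = \<sigma> (md x) \<or> x = \<sigma> (\<sigma> (md x))"
proof -
  have x: "x \<in> H" "x \<notin> \<Union>M" using assms inN by auto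
  have h: "md x \<in> \<Union>M" "vert (md x) = vert x" using md[OF x(1)] by auto
  have "x \<in> {y\<in>H. vert y = vert (md x)}" using x h by simp
  then have "x \<in> {md x, \<sigma> (md x), \<sigma> (\<sigma> (md x))}" using vclass[OF UM_H[OF h(1)]] by simp
  moreover have "x \<noteq> md x" using x h by auto
  ultimately show ?thesis by blast
qed

lemma sig_nodes: assumes h: "h \<in> \<Union>M"
  shows "\<sigma> h \<in> N \<and> \<sigma> (\<sigma> h) \<in> N \<and> md (\<sigma> h) = h \<and> md (\<sigma> (\<sigma> h)) = h"
proof -
  have hH: "h \<in> H" using UM_H h .
  have H1: "\<sigma> h \<in> H" "\<sigma> (\<sigma> h) \<in> H" using sH hH by auto
  have v: "vert (\<sigma> h) = vert h" "vert (\<sigma> (\<sigma> h)) = vert h" using svert hH H1 by auto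
  have d: "\<sigma> h \<noteq> h" "\<sigma> (\<sigma> h) \<noteq> h" using vclass[OF hH] by auto
  have "\<sigma> h \<notin> \<Union>M" using UM_unique[OF _ h] v d by metis
  moreover have "\<sigma> (\<sigma> h) \<notin> \<Union>M" using UM_unique[OF _ h] v d by metis
  moreover have "md (\<sigma> h) = h" using md_eq[OF H1(1) h] v by simp
  moreover have "md (\<sigma> (\<sigma> h)) = h" using md_eq[OF H1(2) h] v by simp
  ultimately show ?thesis using H1 inN by blast
qed

lemma al_N: assumes "x \<in> N" shows "\<alpha> x \<in> N"
proof -
  have x: "x \<in> H" "x \<notin> \<Union>M" using assms inN by auto
  have "\<alpha> x \<notin> \<Union>M"
  proof
    assume "\<alpha> x \<in> \<Union>M" then have "\<alpha> (\<alpha> x) \<in> \<Union>M" by (rule UM_al)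
    then show False using al[OF x(1)] x(2) by simp
  qed
  then show ?thesis using al[OF x(1)] inN by blast
qed

lemma res_gen: "res \<alpha> vert s M Mo u x = (if (x = s (md x)) = (\<not> u (mi (md x))) then s (s (\<alpha> (md x))) else s (\<alpha> (md x)))"
  by (auto simp: res_def Let_def)

lemma res_N: assumes x: "x \<in> N"
  shows "res \<alpha> vert \<sigma> M Mo u x \<in> N \<and> md (res \<alpha> vert \<sigma> M Mo u x) = \<alpha> (md x) \<and>
         res \<alpha> vert \<sigma> M Mo u (res \<alpha> vert \<sigma> M Mo u x) = x \<and>
         (res \<alpha> vert \<sigma> M Mo u x = \<sigma> (\<alpha> (md x)) \<or> res \<alpha> vert \<sigma> M Mo u x = \<sigma> (\<sigma> (\<alpha> (md x))))"
proof -
  let ?r = "res \<alpha> vert \<sigma> M Mo u"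
  define h where "h = md x"
  have xH: "x \<in> H" using x inN by auto
  have h: "h \<in> \<Union>M" using md[OF xH] h_def by simp
  have h': "\<alpha> h \<in> \<Union>M" using UM_al[OF h] .
  have aah: "\<alpha> (\<alpha> h) = h" using al[OF UM_H[OF h]] by simp
  have mih: "mi (\<alpha> h) = mi h" using mi_al[OF h] .
  have sn: "\<sigma> (\<alpha> h) \<in> N \<and> \<sigma> (\<sigma> (\<alpha> h)) \<in> N \<and> md (\<sigma> (\<alpha> h)) = \<alpha> h \<and> md (\<sigma> (\<sigma> (\<alpha> h))) = \<alpha> h"
    using sig_nodes[OF h'] .
  have d1: "\<sigma> (\<sigma> (\<alpha> h)) \<noteq> \<sigma> (\<alpha> h)" using vclass[OF UM_H[OF h']] by simp
  have d2: "\<sigma> (\<sigma> h) \<noteq> \<sigma> h" using vclass[OF UM_H[OF h]] by simp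
  have xc: "x = \<sigma> h \<or> x = \<sigma> (\<sigma> h)" using node_cases[OF x] h_def by simp
  have rx: "?r x = (if (x = \<sigma> h) = (\<not> u (mi h)) then \<sigma> (\<sigma> (\<alpha> h)) else \<sigma> (\<alpha> h))"
    using res_gen h_def by simp
  have ry: "?r y = (if (y = \<sigma> (\<alpha> h)) = (\<not> u (mi h)) then \<sigma> (\<sigma> h) else \<sigma> h)"
    if "y = \<sigma> (\<alpha> h) \<or> y = \<sigma> (\<sigma> (\<alpha> h))" for y
  proof -
    have "md y = \<alpha> h" using that sn by auto
    then show ?thesis using res_gen[of \<sigma> u y] aah mih by simp
  qed
  have r1: "?r x = \<sigma> (\<alpha> h) \<or> ?r x = \<sigma> (\<sigma> (\<alpha> h))" using rx by simp
  have r2: "?r (?r x) = x" using ry[OF r1] rx xc d1 d2 by (auto split: if_splits)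
  show ?thesis using r1 r2 sn h_def by auto
qed

lemma res_indep0: "res \<alpha> vert s M Mo (\<lambda>_. False) x = res \<alpha> vert s M Mo' (\<lambda>_. False) x"
  by (simp add: res_def Let_def)

end

locale PMGO = PMG +
  fixes ori :: "_ \<Rightarrow> bool"
  assumes oal: "\<forall>x\<in>N. ori (\<alpha> x) \<noteq> ori x"
    and ores: "\<forall>x\<in>N. ori (res \<alpha> vert \<sigma> M Mo (\<lambda>_. False) x) \<noteq> ori x"
    and oM: "\<forall>h\<in>\<Union>M. ori (\<sigma> h) = ori (\<sigma> (\<sigma> h))"
begin

abbreviation "r u \<equiv> res \<alpha> vert \<sigma> M Mo u"

lemma ori_res: assumes x: "x \<in> N" shows "ori (r u x) \<noteq> ori x"
proof -
  define h where "h = md x"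
  have xH: "x \<in> H" using x inN by auto
  have h: "h \<in> \<Union>M" using md[OF xH] h_def by simp
  have h': "\<alpha> h \<in> \<Union>M" using UM_al[OF h] .
  have P: "ori (\<sigma> h) = ori (\<sigma> (\<sigma> h))" using oM h by blast
  have Q: "ori (\<sigma> (\<alpha> h)) = ori (\<sigma> (\<sigma> (\<alpha> h)))" using oM h' by blast
  have sn: "\<sigma> h \<in> N" "md (\<sigma> h) = h" using sig_nodes[OF h] by auto
  have "r (\<lambda>_. False) (\<sigma> h) = \<sigma> (\<sigma> (\<alpha> h))" using res_gen[of \<sigma> "\<lambda>_. False" "\<sigma> h"] sn by simp
  then have PQ: "ori (\<sigma> (\<sigma> (\<alpha> h))) \<noteq> ori (\<sigma> h)" using ores sn by metis
  have xc: "x = \<sigma> h \<or> x = \<sigma> (\<sigma> h)" using node_cases[OF x] h_def by simp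
  have rc: "r u x = \<sigma> (\<alpha> h) \<or> r u x = \<sigma> (\<sigma> (\<alpha> h))" using res_N[OF x] h_def by simp
  show ?thesis using xc rc P Q PQ by auto
qed

definition pi where
  "pi u x = (if x \<in> N then (if ori x then r u x else \<alpha> x) else x)"

lemma pi_N: "x \<in> N \<Longrightarrow> pi u x \<in> N"
  using res_N al_N by (simp add: pi_def)

lemma pi_perm: "pi u permutes N"
proof (rule bij_imp_permutes)
  show "pi u x = x" if "x \<notin> N" for x using that by (simp add: pi_def)
  have inj: "inj_on (pi u) N"
  proof (rule inj_onI)
    fix x y assume x: "x \<in> N" and y: "y \<in> N" and e: "pi u x = pi u y"
    have ax: "\<alpha> (\<alpha> x) = x" "\<alpha> (\<alpha> y) = y" using al x y inN by auto
    have rr: "r u (r u x) = x" "r u (r u y) = y" using res_N x y by auto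
    have o1: "ori (r u x) \<noteq> ori x" "ori (r u y) \<noteq> ori y" using ori_res x y by auto
    have o2: "ori (\<alpha> x) \<noteq> ori x" "ori (\<alpha> y) \<noteq> ori y" using oal x y by auto
    show "x = y"
    proof (cases "ori x"; cases "ori y")
      assume "ori x" "ori y" then have "r u x = r u y" using e x y by (simp add: pi_def)
      then show ?thesis using rr by metis
    next
      assume "\<not> ori x" "\<not> ori y" then have "\<alpha> x = \<alpha> y" using e x y by (simp add: pi_def)
      then show ?thesis using ax by metis
    next
      assume a: "ori x" "\<not> ori y" then have "r u x = \<alpha> y" using e x y by (simp add: pi_def)
      then show ?thesis using a o1 o2 by auto
    next
      assume a: "\<not> ori x" "ori y" then have "\<alpha> x = r u y" using e x y by (simp add: pi_def)
      then show ?thesis using a o1 o2 by auto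
    qed
  qed
  have sur: "N \<subseteq> pi u ` N"
  proof
    fix y assume y: "y \<in> N"
    show "y \<in> pi u ` N"
    proof (cases "ori y")
      case True
      have "\<alpha> y \<in> N" "\<not> ori (\<alpha> y)" "\<alpha> (\<alpha> y) = y" using al_N y oal True al inN by auto
      then have "pi u (\<alpha> y) = y" by (simp add: pi_def)
      then show ?thesis using \<open>\<alpha> y \<in> N\<close> by (metis imageI)
    next
      case False
      have "r u y \<in> N" "ori (r u y)" "r u (r u y) = y" using res_N[OF y] ori_res[OF y] False by auto
      then have "pi u (r u y) = y" by (simp add: pi_def)
      then show ?thesis using \<open>r u y \<in> N\<close> by (metis imageI)
    qed
  qed
  have "pi u ` N \<subseteq> N" using pi_N by blast
  then show "bij_betw (pi u) N N" using inj sur by (simp add: bij_betw_def)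
qed

lemma pi_permutation: "permutation (pi u)"
  by (rule permutes_imp_permutation[OF finN pi_perm])

definition Rel where
  "Rel u = {(x, \<alpha> x) |x. x \<in> N} \<union> {(x, r u x) |x. x \<in> N}"

lemma orbit_adj:
  assumes "permutation f" "y \<in> orbit f x" "f y = z \<or> f z = y" shows "z \<in> orbit f x"
proof (cases "f y = z")
  case True then show ?thesis using assms(2) orbit.step by metis
next
  case False
  then have fz: "f z = y" using assms(3) by simp
  have "y \<in> orbit f z" using fz orbit.base by metis
  then have "orbit f y = orbit f z" using orbit_eq_perm[OF assms(1)] by blast
  moreover have "orbit f y = orbit f x" using orbit_eq_perm[OF assms(1) assms(2)] .
  moreover have "z \<in> orbit f z" using permutation_self_in_orbit[OF assms(1)] .
  ultimately show ?thesis by simp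
qed

lemma orbit_classes: assumes x: "x \<in> N"
  shows "{y\<in>N. (x, y) \<in> (Rel u)\<^sup>*} = orbit (pi u) x"
proof
  show "{y\<in>N. (x, y) \<in> (Rel u)\<^sup>*} \<subseteq> orbit (pi u) x"
  proof
    fix y assume "y \<in> {y\<in>N. (x, y) \<in> (Rel u)\<^sup>*}"
    then have "(x, y) \<in> (Rel u)\<^sup>*" by simp
    then show "y \<in> orbit (pi u) x"
    proof induct
      case base then show ?case using permutation_self_in_orbit[OF pi_permutation] .
    next
      case (step y z)
      from step(2) obtain y' where y': "y' = y" "y \<in> N" "z = \<alpha> y \<or> z = r u y"
        by (auto simp: Rel_def)
      have "pi u y = z \<or> pi u z = y"
      proof (cases "ori y")
        case True
        show ?thesis
        proof (cases "z = r u y")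
          case True then show ?thesis using \<open>ori y\<close> y' by (simp add: pi_def)
        next
          case False
          then have z: "z = \<alpha> y" using y' by simp
          have "z \<in> N" "\<not> ori z" "\<alpha> z = y" using z al_N y' oal \<open>ori y\<close> al inN by auto
          then show ?thesis by (simp add: pi_def)
        qed
      next
        case False
        show ?thesis
        proof (cases "z = \<alpha> y")
          case True then show ?thesis using \<open>\<not> ori y\<close> y' by (simp add: pi_def)
        next
          case False
          then have z: "z = r u y" using y' by simp
          have "z \<in> N" "ori z" "r u z = y" using z res_N[of y u] ori_res[of y u] y' \<open>\<not> ori y\<close> by auto
          then show ?thesis by (simp add: pi_def)
        qed
      qed
      then show ?case using orbit_adj[OF pi_permutation step(3)] by blast
    qed
  qed
next
  show "orbit (pi u) x \<subseteq> {y\<in>N. (x, y) \<in> (Rel u)\<^sup>*}"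
  proof
    fix y assume "y \<in> orbit (pi u) x"
    then show "y \<in> {y\<in>N. (x, y) \<in> (Rel u)\<^sup>*}"
    proof induct
      case base
      have "(x, pi u x) \<in> Rel u" using x by (auto simp: pi_def Rel_def)
      then show ?case using pi_N[OF x] by auto
    next
      case (step y)
      then have yN: "y \<in> N" and xy: "(x, y) \<in> (Rel u)\<^sup>*" by auto
      have "(y, pi u y) \<in> Rel u" using yN by (auto simp: pi_def Rel_def)
      then show ?case using pi_N[OF yN] xy by (auto intro: rtrancl_into_rtrancl)
    qed
  qed
qed

lemma ncirc_orb: "ncirc H \<alpha> vert \<sigma> M Mo u = int (card ((\<lambda>y. orbit (pi u) y) ` N))"
proof -
  have "(\<lambda>x. {y\<in>N. (x, y) \<in> (Rel u)\<^sup>*}) ` N = (\<lambda>y. orbit (pi u) y) ` N"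
    by (rule image_cong) (simp_all add: orbit_classes)
  then show ?thesis by (simp add: ncirc_def num_classes_def Rel_def)
qed


lemma pi_switch:
  assumes i: "i < card M"
  shows "\<exists>p q. p \<noteq> q \<and> pi (u(i:=True)) = pi (u(i:=False)) \<circ> transpose p q"
proof -
  obtain y where y: "y \<in> H" "Mo i = {y, \<alpha> y}" using Medge[OF Mo_in[OF i]] by blast
  define h where "h = y"
  have hM: "h \<in> \<Union>M" using Mo_in[OF i] y h_def by blast
  have h'M: "\<alpha> h \<in> \<Union>M" using UM_al[OF hM] .
  have aah: "\<alpha> (\<alpha> h) = h" using al[OF UM_H[OF hM]] by simp
  have mih: "mi h = i" using mi_eq[OF i] y h_def by simp
  have mih': "mi (\<alpha> h) = i" using mi_al[OF hM] mih by simp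
  define a b c d where "a = \<sigma> h" and "b = \<sigma> (\<sigma> h)" and "c = \<sigma> (\<sigma> (\<alpha> h))" and "d = \<sigma> (\<alpha> h)"
  have sn1: "a \<in> N" "b \<in> N" "md a = h" "md b = h" using sig_nodes[OF hM] a_def b_def by auto
  have sn2: "c \<in> N" "d \<in> N" "md c = \<alpha> h" "md d = \<alpha> h" using sig_nodes[OF h'M] c_def d_def by auto
  have hne: "\<alpha> h \<noteq> h" using al[OF UM_H[OF hM]] by simp
  have ab: "a \<noteq> b" using vclass[OF UM_H[OF hM]] a_def b_def by auto
  have cd: "c \<noteq> d" using vclass[OF UM_H[OF h'M]] c_def d_def by auto
  have dis: "a \<noteq> c" "a \<noteq> d" "b \<noteq> c" "b \<noteq> d" using sn1 sn2 hne by metis+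
  let ?T = "u(i:=True)" and ?F = "u(i:=False)"
  have rT: "r ?T a = d" "r ?T b = c" "r ?T c = b" "r ?T d = a"
    using res_gen[of \<sigma> ?T a] res_gen[of \<sigma> ?T b] res_gen[of \<sigma> ?T c] res_gen[of \<sigma> ?T d]
      sn1 sn2 mih mih' aah ab cd a_def b_def c_def d_def by auto
  have rF: "r ?F a = c" "r ?F b = d" "r ?F c = a" "r ?F d = b"
    using res_gen[of \<sigma> ?F a] res_gen[of \<sigma> ?F b] res_gen[of \<sigma> ?F c] res_gen[of \<sigma> ?F d]
      sn1 sn2 mih mih' aah ab cd a_def b_def c_def d_def by auto
  have rO: "r ?T x = r ?F x" if x: "x \<in> N" "x \<notin> {a, b, c, d}" for x
  proof -
    have xH: "x \<in> H" using x inN by auto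
    have "md x \<noteq> h"
    proof
      assume "md x = h" then have "x = a \<or> x = b" using node_cases[OF x(1)] a_def b_def by auto
      then show False using x by auto
    qed
    moreover have "md x \<noteq> \<alpha> h"
    proof
      assume "md x = \<alpha> h" then have "x = d \<or> x = c" using node_cases[OF x(1)] c_def d_def by auto
      then show False using x by auto
    qed
    ultimately have "mi (md x) \<noteq> i"
    proof -
      assume n: "md x \<noteq> h" "md x \<noteq> \<alpha> h"
      show "mi (md x) \<noteq> i"
      proof
        assume "mi (md x) = i"
        then have "md x \<in> Mo i" using mi[of "md x"] md[OF xH] by simp
        then show False using y h_def n by auto
      qed
    qed
    then show ?thesis using res_gen[of \<sigma> ?T x] res_gen[of \<sigma> ?F x] by simp
  qed
  have oab: "ori a = ori b" using oM hM a_def b_def by blast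
  have ocd: "ori c = ori d" using oM h'M c_def d_def by blast
  have oac: "ori c \<noteq> ori a" using ori_res[OF sn1(1), of ?F] rF by simp
  show ?thesis
  proof (cases "ori a")
    case True
    have "pi ?T = pi ?F \<circ> transpose a b"
    proof
      fix x
      show "pi ?T x = (pi ?F \<circ> transpose a b) x"
      proof (cases "x \<in> N")
        case False
        then have "x \<noteq> a" "x \<noteq> b" using sn1 by auto
        then show ?thesis using False by (simp add: pi_def)
      next
        case xN: True
        consider "x = a" | "x = b" | "x = c" | "x = d" | "x \<notin> {a, b, c, d}" by blast
        then show ?thesis
        proof cases
          case 1 then show ?thesis using True oab rT rF sn1 by (simp add: pi_def)
        next
          case 2 then show ?thesis using True oab rT rF sn1 ab by (simp add: pi_def)
        next
          case 3 then show ?thesis using True oab oac ocd dis sn2 by (simp add: pi_def transpose_def)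
        next
          case 4 then show ?thesis using True oab oac ocd dis sn2 by (simp add: pi_def transpose_def)
        next
          case 5 then show ?thesis using xN rO[OF xN] by (simp add: pi_def transpose_def)
        qed
      qed
    qed
    then show ?thesis using ab by blast
  next
    case False
    have "pi ?T = pi ?F \<circ> transpose c d"
    proof
      fix x
      show "pi ?T x = (pi ?F \<circ> transpose c d) x"
      proof (cases "x \<in> N")
        case False
        then have "x \<noteq> c" "x \<noteq> d" using sn2 by auto
        then show ?thesis using False by (simp add: pi_def)
      next
        case xN: True
        consider "x = a" | "x = b" | "x = c" | "x = d" | "x \<notin> {a, b, c, d}" by blast
        then show ?thesis
        proof cases
          case 1 then show ?thesis using False oab oac ocd dis sn1 by (simp add: pi_def transpose_def)
        next
          case 2 then show ?thesis using False oab oac ocd dis sn1 by (simp add: pi_def transpose_def)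
        next
          case 3 then show ?thesis using False oac ocd rT rF sn2 by (simp add: pi_def)
        next
          case 4 then show ?thesis using False oac ocd rT rF sn2 cd by (simp add: pi_def)
        next
          case 5 then show ?thesis using xN rO[OF xN] by (simp add: pi_def transpose_def)
        qed
      qed
    qed
    then show ?thesis using cd by blast
  qed
qed

lemma ncirc_flip:
  assumes i: "i < card M"
  shows "ncirc H \<alpha> vert \<sigma> M Mo (u(i:=True)) \<noteq> ncirc H \<alpha> vert \<sigma> M Mo (u(i:=False))"
proof -
  obtain p q where pq: "p \<noteq> q" "pi (u(i:=True)) = pi (u(i:=False)) \<circ> transpose p q"
    using pi_switch[OF i] by blast
  have "evenperm (pi (u(i:=True))) = (evenperm (pi (u(i:=False))) = evenperm (transpose p q))"
    unfolding pq(2) by (rule evenperm_comp[OF pi_permutation permutation_swap_id])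
  then have ev: "evenperm (pi (u(i:=True))) \<longleftrightarrow> \<not> evenperm (pi (u(i:=False)))"
    using pq(1) by (simp add: evenperm_swap)
  have e1: "evenperm (pi (u(i:=True))) \<longleftrightarrow> even (card N + card ((\<lambda>y. orbit (pi (u(i:=True))) y) ` N))"
    by (rule evenperm_orbits[OF finN pi_perm])
  have e2: "evenperm (pi (u(i:=False))) \<longleftrightarrow> even (card N + card ((\<lambda>y. orbit (pi (u(i:=False))) y) ` N))"
    by (rule evenperm_orbits[OF finN pi_perm])
  have "card ((\<lambda>y. orbit (pi (u(i:=True))) y) ` N) \<noteq> card ((\<lambda>y. orbit (pi (u(i:=False))) y) ` N)"
  proof
    assume "card ((\<lambda>y. orbit (pi (u(i:=True))) y) ` N) = card ((\<lambda>y. orbit (pi (u(i:=False))) y) ` N)"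
    then have "even (card N + card ((\<lambda>y. orbit (pi (u(i:=True))) y) ` N)) = even (card N + card ((\<lambda>y. orbit (pi (u(i:=False))) y) ` N))"
      by simp
    then show False using ev e1 e2 by argo
  qed
  then show ?thesis by (simp add: ncirc_orb)
qed

end

context PMG begin

lemma sigma_change:
  assumes sb': "bij_betw \<sigma>' H H" and sv': "\<forall>x\<in>H. vert (\<sigma>' x) = vert x \<and> \<sigma>' x \<noteq> x"
  shows "\<exists>w. \<forall>v. ncirc H \<alpha> vert \<sigma>' M Mo v = ncirc H \<alpha> vert \<sigma> M Mo (\<lambda>k. v k \<noteq> w k)"
proof -
  define f where "f h = (\<sigma>' h \<noteq> \<sigma> h)" for h
  have sf: "\<sigma>' h = (if f h then \<sigma> (\<sigma> h) else \<sigma> h) \<and> \<sigma>' (\<sigma>' h) = (if f h then \<sigma> h else \<sigma> (\<sigma> h))"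
    if hH: "h \<in> H" for h
  proof -
    have c1: "{y\<in>H. vert y = vert h} = {h, \<sigma> h, \<sigma> (\<sigma> h)} \<and> \<sigma> h \<noteq> h \<and> \<sigma> (\<sigma> h) \<noteq> \<sigma> h \<and> \<sigma> (\<sigma> h) \<noteq> h"
      by (rule vclass[OF hH])
    have c2: "{y\<in>H. vert y = vert h} = {h, \<sigma>' h, \<sigma>' (\<sigma>' h)} \<and> \<sigma>' h \<noteq> h \<and> \<sigma>' (\<sigma>' h) \<noteq> \<sigma>' h \<and> \<sigma>' (\<sigma>' h) \<noteq> h"
      by (rule tri3[OF tri sb' sv' hH])
    have e: "{h, \<sigma> h, \<sigma> (\<sigma> h)} = {h, \<sigma>' h, \<sigma>' (\<sigma>' h)}" using c1 c2 by simp
    have m1: "\<sigma>' h \<in> {\<sigma> h, \<sigma> (\<sigma> h)}" using e c2 by blast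
    have m2: "\<sigma>' (\<sigma>' h) \<in> {\<sigma> h, \<sigma> (\<sigma> h)}" using e c2 by blast
    show ?thesis using m1 m2 c1 c2 by (auto simp: f_def)
  qed
  define w where "w k = (let h0 = (SOME h0. h0 \<in> Mo k) in f h0 \<noteq> f (\<alpha> h0))" for k
  have key: "res \<alpha> vert \<sigma>' M Mo v x = res \<alpha> vert \<sigma> M Mo (\<lambda>k. v k \<noteq> w k) x" if x: "x \<in> N" for v x
  proof -
    define h where "h = md x"
    have xH: "x \<in> H" using x inN by auto
    have hM: "h \<in> \<Union>M" using md[OF xH] h_def by simp
    have hH: "h \<in> H" using UM_H[OF hM] .
    have h'H: "\<alpha> h \<in> H" using al[OF hH] by simp
    have aah: "\<alpha> (\<alpha> h) = h" using al[OF hH] by simp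
    define i where "i = mi h"
    have hi: "h \<in> Mo i" "i < card M" using mi[OF hM] i_def by auto
    have Moi: "Mo i = {h, \<alpha> h}" using edge_other[OF Mo_in[OF hi(2)] hi(1)] .
    have wi: "w i = (f h \<noteq> f (\<alpha> h))"
    proof -
      have "(SOME h0. h0 \<in> Mo i) \<in> Mo i" using hi(1) by (rule someI)
      then have "(SOME h0. h0 \<in> Mo i) = h \<or> (SOME h0. h0 \<in> Mo i) = \<alpha> h" using Moi by simp
      then show ?thesis unfolding w_def Let_def using aah by auto
    qed
    have xc: "x = \<sigma> h \<or> x = \<sigma> (\<sigma> h)" using node_cases[OF x] h_def by simp
    have d1: "\<sigma> (\<sigma> h) \<noteq> \<sigma> h" using vclass[OF hH] by simp
    have d2: "\<sigma> (\<sigma> (\<alpha> h)) \<noteq> \<sigma> (\<alpha> h)" using vclass[OF h'H] by simp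
    have s1: "\<sigma>' h = (if f h then \<sigma> (\<sigma> h) else \<sigma> h)" using sf[OF hH] by simp
    have s2a: "\<sigma>' (\<alpha> h) = (if f (\<alpha> h) then \<sigma> (\<sigma> (\<alpha> h)) else \<sigma> (\<alpha> h))"
      using sf[OF h'H] by (rule conjunct1)
    have s2b0: "\<sigma>' (\<sigma>' (\<alpha> h)) = (if f (\<alpha> h) then \<sigma> (\<alpha> h) else \<sigma> (\<sigma> (\<alpha> h)))"
      using sf[OF h'H] by (rule conjunct2)
    note s2b = s2b0[unfolded s2a]
    note s2 = s2a s2b
    have r1: "res \<alpha> vert \<sigma>' M Mo v x = (if (x = \<sigma>' h) = (\<not> v i) then \<sigma>' (\<sigma>' (\<alpha> h)) else \<sigma>' (\<alpha> h))"
      unfolding h_def i_def by (rule res_gen)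
    have r2: "res \<alpha> vert \<sigma> M Mo (\<lambda>k. v k \<noteq> w k) x = (if (x = \<sigma> h) = (\<not> (v i \<noteq> w i)) then \<sigma> (\<sigma> (\<alpha> h)) else \<sigma> (\<alpha> h))"
      unfolding h_def i_def by (rule res_gen)
    show ?thesis unfolding r1 r2 wi s1 s2 using xc d1 d2 by (cases "f h"; cases "f (\<alpha> h)"; cases "v i"; auto)
  qed
  have "\<And>v. {(x, res \<alpha> vert \<sigma>' M Mo v x) |x. x \<in> N} = {(x, res \<alpha> vert \<sigma> M Mo (\<lambda>k. v k \<noteq> w k) x) |x. x \<in> N}"
    by (rule Collect_cong) (use key in auto)
  then have "\<forall>v. ncirc H \<alpha> vert \<sigma>' M Mo v = ncirc H \<alpha> vert \<sigma> M Mo (\<lambda>k. v k \<noteq> w k)"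
    by (simp add: ncirc_def)
  then show ?thesis by blast
qed

end

theorem mainTheorem10:
  fixes H :: "'d set" and \<alpha> \<sigma> :: "'d \<Rightarrow> 'd" and vert :: "'d \<Rightarrow> 'v"
    and M :: "'d set set" and Mo :: "nat \<Rightarrow> 'd set"
  assumes "pm_graph H \<alpha> vert \<sigma> M Mo"
    and "\<not> in_scrG H \<alpha> vert M"
    and "\<forall>i < card M. m_arc H \<alpha> vert \<sigma> M Mo (\<lambda>_. False) i"
  shows "\<not> consistently_orientable_zero H \<alpha> vert \<sigma> M Mo"
proof
  assume "consistently_orientable_zero H \<alpha> vert \<sigma> M Mo"
  then obtain ori :: "'d \<Rightarrow> bool" where oo: "(\<forall>x \<in> nodes H M. ori (\<alpha> x) \<noteq> ori x \<and> ori (res \<alpha> vert \<sigma> M Mo (\<lambda>_. False) x) \<noteq> ori x) \<and>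
        (\<forall>i < card M. \<forall>h \<in> Mo i. ori (\<sigma> h) = ori (\<sigma> (\<sigma> h)))"
    unfolding consistently_orientable_zero_def by (rule exE)
  have o1: "\<forall>x \<in> nodes H M. ori (\<alpha> x) \<noteq> ori x \<and> ori (res \<alpha> vert \<sigma> M Mo (\<lambda>_. False) x) \<noteq> ori x"
    using oo by (rule conjunct1)
  have o2: "\<forall>i < card M. \<forall>h \<in> Mo i. ori (\<sigma> h) = ori (\<sigma> (\<sigma> h))"
    using oo by (rule conjunct2)
  have tri: "trivalent_graph H \<alpha> vert" and pmat: "perfect_matching H \<alpha> vert M"
    and pe: "plane_embedding H \<alpha> vert \<sigma>" and mo: "matching_ordering M Mo"
    using assms(1) by (simp_all add: pm_graph_def)
  have sb: "bij_betw \<sigma> H H" and sv: "\<forall>x\<in>H. vert (\<sigma> x) = vert x \<and> \<sigma> x \<noteq> x"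
    using pe by (simp_all add: plane_embedding_def)
  interpret P0: PMG H \<alpha> \<sigma> vert M Mo using tri pmat sb sv mo by (simp add: PMG_def)
  have oM: "\<forall>h\<in>\<Union>M. ori (\<sigma> h) = ori (\<sigma> (\<sigma> h))" using P0.mi o2 by blast
  have "in_scrG H \<alpha> vert M"
    unfolding in_scrG_def
  proof (intro allI impI)
    fix \<sigma>' Mo' assume a: "plane_embedding H \<alpha> vert \<sigma>' \<and> matching_ordering M Mo'"
    have sb': "bij_betw \<sigma>' H H" and sv': "\<forall>x\<in>H. vert (\<sigma>' x) = vert x \<and> \<sigma>' x \<noteq> x"
      using a by (simp_all add: plane_embedding_def)
    have o1': "\<forall>x \<in> nodes H M. ori (res \<alpha> vert \<sigma> M Mo' (\<lambda>_. False) x) \<noteq> ori x"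
      using o1 P0.res_indep0[of \<sigma> x Mo' for x] by (simp add: res_def Let_def)
    interpret P: PMGO H \<alpha> \<sigma> vert M Mo' ori
      using tri pmat sb sv a o1 o1' oM by (simp add: PMGO_def PMGO_axioms_def PMG_def)
    obtain w where w: "\<forall>v. ncirc H \<alpha> vert \<sigma>' M Mo' v = ncirc H \<alpha> vert \<sigma> M Mo' (\<lambda>k. v k \<noteq> w k)"
      using P.sigma_change[OF sb' sv'] by blast
    show "\<not> has_bad_face H \<alpha> vert \<sigma>' M Mo'"
    proof
      assume "has_bad_face H \<alpha> vert \<sigma>' M Mo'"
      then obtain v k where k: "k < card M" "\<not> v k" "eta_arc H \<alpha> vert \<sigma>' M Mo' v k"
        unfolding has_bad_face_def bad_face_cond_def by blast
      then have e: "ncirc H \<alpha> vert \<sigma>' M Mo' (v(k:=True)) = ncirc H \<alpha> vert \<sigma>' M Mo' v"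
        by (simp add: eta_arc_def arc_change_def surg_def)
      define u where "u = (\<lambda>x. v x \<noteq> w x)"
      have u1: "(\<lambda>x. (v(k:=True)) x \<noteq> w x) = u(k := \<not> w k)" by (rule ext) (simp add: u_def)
      have u2: "u = u(k := w k)" using k(2) by (intro ext) (simp add: u_def)
      have "ncirc H \<alpha> vert \<sigma> M Mo' (u(k := \<not> w k)) = ncirc H \<alpha> vert \<sigma> M Mo' (u(k := w k))"
      proof -
        have A: "ncirc H \<alpha> vert \<sigma>' M Mo' (v(k:=True)) = ncirc H \<alpha> vert \<sigma> M Mo' (u(k := \<not> w k))"
          unfolding u1[symmetric] by (rule w[rule_format])
        have B: "ncirc H \<alpha> vert \<sigma>' M Mo' v = ncirc H \<alpha> vert \<sigma> M Mo' u"
          unfolding u_def by (rule w[rule_format])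
        show ?thesis using A B e by (simp add: u2[symmetric])
      qed
      then show False using P.ncirc_flip[OF k(1), of u] by (cases "w k") (simp_all add: eq_commute)
    qed
  qed
  with assms(2) show False by simp
qed

end
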